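(* Assume $G$ is connected with $n\ge2$. Let $0=\lambda_1<\lambda_2\le\dots\le\lambda_n$ be the eigenvalues of $\Delta$. Let $S\subset V$ with $\emptyset\ne S\ne V$ and $R_S:=\mathrm{vol}\,S/\mathrm{vol}\,V\ne\frac12$. Define $$\tau_\rho(S)=\lambda_n^{-1}\log\Big(1+\tfrac12d_-^{r/2}(\mathrm{vol}\,S)^{-1/2}\Big),$$ $$\tau_t(S)=\frac1{\lambda_2}\log\left(\frac{(\mathrm{vol}\,S)^{1/2}(\mathrm{vol}\,S^c)^{1/2}}{(\mathrm{vol}\,V)^{1/2}|R_S-\frac12|d_-^{r/2}}\right).$$ If $\dfrac{\lambda_2}{\lambda_n}<\dfrac{\log\sqrt2}{\log\frac32}$, then $\tau_\rho(S)<\tau_t(S)$.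
   Context: $G=(V,E)$ is a finite undirected weighted graph with vertex set $V=\{1,\dots,n\}$. The weights satisfy $\omega_{ij}=\omega_{ji}\ge0$, with $\omega_{ij}>0$ iff $\{i,j\}\in E$, and $\omega_{ii}=0$. The degrees are $d_i=\sum_j\omega_{ij}>0$, and $d_-=\min_id_i$. A parameter $r\in[0,1]$ is fixed. For $S\subset V$, $S^c=V\setminus S$ and $\mathrm{vol}\,S=\sum_{i\in S}d_i^r$. The graph Laplacian is $(\Delta u)_i=d_i^{-r}\sum_j\omega_{ij}(u_i-u_j)$, and its eigenvalues are those of the matrix $D^{-r}(D-A)$, where $A=(\omega_{ij})$ and $D=\mathrm{diag}(d_i)$. *)

theory Defs
  imports "Jordan_Normal_Form.Char_Poly"
begin

(* Vertices are 0..<n (shifted from 1..n); weights w :: nat => nat => real. *)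

definition deg :: "(nat \<Rightarrow> nat \<Rightarrow> real) \<Rightarrow> nat \<Rightarrow> nat \<Rightarrow> real" where
  "deg w n i = (\<Sum>j<n. w i j)"

definition dmin :: "(nat \<Rightarrow> nat \<Rightarrow> real) \<Rightarrow> nat \<Rightarrow> real" where
  "dmin w n = Min (deg w n ` {..<n})"

definition vol :: "(nat \<Rightarrow> nat \<Rightarrow> real) \<Rightarrow> nat \<Rightarrow> real \<Rightarrow> nat set \<Rightarrow> real" where
  "vol w n r S = (\<Sum>i\<in>S. deg w n i powr r)"

definition laplacian_mat :: "(nat \<Rightarrow> nat \<Rightarrow> real) \<Rightarrow> nat \<Rightarrow> real \<Rightarrow> real mat" where
  "laplacian_mat w n r = mat n n (\<lambda>(i,j). deg w n i powr (-r) *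
      ((if i = j then deg w n i else 0) - w i j))"

definition edge_rel :: "(nat \<Rightarrow> nat \<Rightarrow> real) \<Rightarrow> nat \<Rightarrow> (nat \<times> nat) set" where
  "edge_rel w n = {(i,j). i < n \<and> j < n \<and> w i j > 0}"

definition connected_graph :: "(nat \<Rightarrow> nat \<Rightarrow> real) \<Rightarrow> nat \<Rightarrow> bool" where
  "connected_graph w n = (\<forall>i<n. \<forall>j<n. (i,j) \<in> (edge_rel w n)\<^sup>*)"

definition tau_rho :: "(nat \<Rightarrow> nat \<Rightarrow> real) \<Rightarrow> nat \<Rightarrow> real \<Rightarrow> real \<Rightarrow> nat set \<Rightarrow> real" where
  "tau_rho w n r lam_n S =
     (1 / lam_n) * ln (1 + (1/2) * dmin w n powr (r/2) * vol w n r S powr (-1/2))"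

definition tau_t :: "(nat \<Rightarrow> nat \<Rightarrow> real) \<Rightarrow> nat \<Rightarrow> real \<Rightarrow> real \<Rightarrow> nat set \<Rightarrow> real" where
  "tau_t w n r lam_2 S =
     (let V = {..<n}; RS = vol w n r S / vol w n r V in
      (1 / lam_2) * ln ((vol w n r S powr (1/2) * vol w n r (V - S) powr (1/2)) /
         (vol w n r V powr (1/2) * \<bar>RS - 1/2\<bar> * dmin w n powr (r/2))))"

end

theory Submission
  imports Defs "Jordan_Normal_Form.Schur_Decomposition"
begin

lemma key_aux: fixes a c t :: real
  assumes a: "a > 0" and c: "c > 0" and t: "t > 0" "t \<le> a" and ac: "a \<le> c"
  shows "(a-c)^2 * t < 2*a*c*(a+c)"
proof -
  have "(a-c)^2 * t \<le> (a-c)^2 * a" using t by (intro mult_left_mono) auto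
  also have "(c-a)^2 \<le> c^2" using a ac by (intro power_mono) auto
  hence "(a-c)^2 \<le> c^2" by (simp add: power2_commute)
  hence "(a-c)^2 * a \<le> c^2 * a" using a by (intro mult_right_mono) auto
  also have "c^2 * a < 2*a*c*(a+c)"
  proof -
    have "0 < a * (c * c) + a * (a * (c * 2))" using a c by (intro add_pos_pos mult_pos_pos) auto
    thus ?thesis by (simp add: power2_eq_square algebra_simps)
  qed
  finally show ?thesis .
qed
lemma key: fixes a c t :: real
  assumes a: "a > 0" and c: "c > 0" and t: "t > 0" "t \<le> a" "t \<le> c"
  shows "(a-c)^2 * t < 2*a*c*(a+c)"
proof (cases "a \<le> c")
  case True thus ?thesis using key_aux[OF a c t(1,2) True] by simp
next
  case False
  have "(c-a)^2 * t < 2*c*a*(c+a)" using key_aux[OF c a t(1,3)] False by simp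
  thus ?thesis by (simp add: power2_commute algebra_simps)
qed

lemma powr_cancel: "(x::real) > 0 \<Longrightarrow> x powr r * x powr (-r) = 1"
  by (metis powr_add add.right_inverse powr_zero_eq_one less_irrefl)

lemma quad_ident:
  fixes w :: "nat \<Rightarrow> nat \<Rightarrow> real"
  assumes sym: "\<forall>i<n. \<forall>j<n. w i j = w j i"
  shows "(\<Sum>i<n. g i * (\<Sum>j<n. w i j * (f i - f j))) =
    (1/2) * (\<Sum>i<n. \<Sum>j<n. w i j * (f i - f j) * (g i - g j))"
proof -
  have A: "(\<Sum>i<n. g i * (\<Sum>j<n. w i j * (f i - f j))) = (\<Sum>i<n. \<Sum>j<n. w i j * (f i - f j) * g i)"
    by (simp add: sum_distrib_left mult_ac)
  have B: "(\<Sum>i<n. \<Sum>j<n. w i j * (f i - f j) * g i) = (\<Sum>i<n. \<Sum>j<n. - (w i j * (f i - f j) * g j))"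
    apply (subst sum.swap)
    apply (rule sum.cong[OF refl], rule sum.cong[OF refl])
    using sym by (simp add: algebra_simps)
  have C: "(\<Sum>i<n. \<Sum>j<n. w i j * (f i - f j) * (g i - g j)) =
     (\<Sum>i<n. \<Sum>j<n. w i j * (f i - f j) * g i) + (\<Sum>i<n. \<Sum>j<n. - (w i j * (f i - f j) * g j))"
    by (simp add: sum.distrib[symmetric] algebra_simps)
  show ?thesis using A B C by simp
qed

lemma lap_mulvec:
  assumes u: "u \<in> carrier_vec n" and i: "i < n"
  shows "(laplacian_mat w n r *\<^sub>v u) $ i = deg w n i powr (-r) * (\<Sum>j<n. w i j * (u$i - u$j))"
proof -
  have "(laplacian_mat w n r *\<^sub>v u) $ i = (\<Sum>j<n. deg w n i powr (-r) *
      ((if i = j then deg w n i else 0) - w i j) * u $ j)"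
    using u i by (simp add: laplacian_mat_def scalar_prod_def atLeast0LessThan)
  also have "\<dots> = deg w n i powr (-r) * ((\<Sum>j<n. (if i = j then deg w n i else 0) * u$j) - (\<Sum>j<n. w i j * u$j))"
    by (simp add: sum_distrib_left sum_subtractf[symmetric] algebra_simps)
  also have "(\<Sum>j<n. (if i = j then deg w n i else 0) * u$j) = deg w n i * u$i"
    using i by (simp add: if_distrib[where f="\<lambda>x. x * _"] sum.delta cong: if_cong)
  also have "deg w n i * u$i = (\<Sum>j<n. w i j * u$i)" by (simp add: deg_def sum_distrib_right)
  finally show ?thesis by (simp add: sum_subtractf[symmetric] algebra_simps)
qed

context
  fixes w :: "nat \<Rightarrow> nat \<Rightarrow> real" and n :: nat and r :: real
  assumes sym: "\<forall>i<n. \<forall>j<n. w i j = w j i"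
    and nonneg: "\<forall>i<n. \<forall>j<n. w i j \<ge> 0"
    and degpos: "\<forall>i<n. deg w n i > 0"
begin

lemma eig_eq:
  assumes u: "u \<in> carrier_vec n" and ev: "laplacian_mat w n r *\<^sub>v u = \<mu> \<cdot>\<^sub>v u"
  shows "(\<Sum>i<n. \<mu> * (deg w n i powr r * (u$i)^2)) =
    (1/2) * (\<Sum>i<n. \<Sum>j<n. w i j * (u$i - u$j)^2)"
proof -
  have row: "(\<Sum>j<n. w i j * (u$i - u$j)) = \<mu> * deg w n i powr r * u$i" if i: "i < n" for i
  proof -
    have "deg w n i powr (-r) * (\<Sum>j<n. w i j * (u$i - u$j)) = \<mu> * u$i"
      using lap_mulvec[OF u i, of w r] ev i u by (metis index_smult_vec(1) carrier_vecD)
    hence "deg w n i powr r * (deg w n i powr (-r) * (\<Sum>j<n. w i j * (u$i - u$j))) = deg w n i powr r * (\<mu> * u$i)"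
      by simp
    moreover have "deg w n i powr r * deg w n i powr (-r) = 1"
      using degpos[rule_format, OF i] by (rule powr_cancel)
    ultimately show ?thesis by (metis (no_types, lifting) mult.assoc mult.commute mult_1)
  qed
  have "(\<Sum>i<n. \<mu> * (deg w n i powr r * (u$i)^2)) = (\<Sum>i<n. u$i * (\<Sum>j<n. w i j * (u$i - u$j)))"
    by (rule sum.cong[OF refl], simp add: row power2_eq_square mult_ac)
  also have "\<dots> = (1/2) * (\<Sum>i<n. \<Sum>j<n. w i j * (u$i - u$j) * (u$i - u$j))"
    by (rule quad_ident[OF sym])
  finally show ?thesis by (simp add: power2_eq_square mult.assoc)
qed

lemma eig_nonneg:
  assumes u: "u \<in> carrier_vec n" and nz: "u \<noteq> 0\<^sub>v n"
    and ev: "laplacian_mat w n r *\<^sub>v u = \<mu> \<cdot>\<^sub>v u"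
  shows "\<mu> \<ge> 0"
proof (rule ccontr)
  assume neg: "\<not> \<mu> \<ge> 0"
  have "\<exists>k<n. u$k \<noteq> 0"
  proof (rule ccontr)
    assume "\<not> (\<exists>k<n. u$k \<noteq> 0)"
    hence "u = 0\<^sub>v n" using u by (intro eq_vecI) auto
    thus False using nz by simp
  qed
  then obtain k where k: "k < n" "u$k \<noteq> 0" by blast
  have pos: "(\<Sum>i<n. deg w n i powr r * (u$i)^2) > 0"
  proof -
    have "(\<Sum>i<n. deg w n i powr r * (u$i)^2) \<ge> deg w n k powr r * (u$k)^2"
      by (rule member_le_sum) (use k in auto)
    moreover have "deg w n k powr r * (u$k)^2 > 0" using k degpos[rule_format, OF k(1)] by simp
    ultimately show ?thesis by linarith
  qed
  have "(\<Sum>i<n. \<mu> * (deg w n i powr r * (u$i)^2)) = \<mu> * (\<Sum>i<n. deg w n i powr r * (u$i)^2)"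
    by (simp add: sum_distrib_left)
  also have "\<dots> < 0" using pos neg by (simp add: mult_neg_pos)
  finally have "(1/2) * (\<Sum>i<n. \<Sum>j<n. w i j * (u$i - u$j)^2) < 0" using eig_eq[OF u ev] by simp
  moreover have "(\<Sum>i<n. \<Sum>j<n. w i j * (u$i - u$j)^2) \<ge> 0"
    using nonneg by (intro sum_nonneg) auto
  ultimately show False by simp
qed

lemma kernel_const:
  assumes u: "u \<in> carrier_vec n" and conn: "connected_graph w n"
    and ker: "laplacian_mat w n r *\<^sub>v u = 0\<^sub>v n" and j: "j < n"
  shows "u$j = u$0"
proof -
  have ev: "laplacian_mat w n r *\<^sub>v u = 0 \<cdot>\<^sub>v u" using ker u by auto
  have z: "(\<Sum>i<n. \<Sum>j<n. w i j * (u$i - u$j)^2) = 0" using eig_eq[OF u ev] by simp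
  have edge: "u$a = u$b" if ab: "(a,b) \<in> edge_rel w n" for a b
  proof -
    from ab have a: "a < n" and b: "b < n" and wp: "w a b > 0" by (auto simp: edge_rel_def)
    have nn: "\<And>i. i\<in>{..<n} \<Longrightarrow> 0 \<le> (\<Sum>j<n. w i j * (u$i - u$j)^2)"
      using nonneg by (auto intro!: sum_nonneg)
    have all0: "\<forall>i\<in>{..<n}. (\<Sum>j<n. w i j * (u$i - u$j)^2) = 0"
      using iffD1[OF sum_nonneg_eq_0_iff[OF finite_lessThan nn] z] .
    have row0: "(\<Sum>j<n. w a j * (u$a - u$j)^2) = 0" using all0 a by simp
    have nn2: "\<And>j. j\<in>{..<n} \<Longrightarrow> 0 \<le> w a j * (u$a - u$j)^2" using nonneg a by simp
    have "\<forall>j\<in>{..<n}. w a j * (u$a - u$j)^2 = 0"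
      using iffD1[OF sum_nonneg_eq_0_iff[OF finite_lessThan nn2] row0] .
    hence "w a b * (u$a - u$b)^2 = 0" using b by simp
    thus ?thesis using wp by simp
  qed
  have "0 < n" using j by simp
  hence "(0, j) \<in> (edge_rel w n)\<^sup>*" using conn j by (auto simp: connected_graph_def)
  thus ?thesis
  proof (induction rule: rtrancl_induct)
    case base
    then show ?case by simp
  next
    case (step y z)
    then show ?case using edge[OF step(2)] by simp
  qed
qed

lemma weighted_sum_zero:
  assumes v: "v \<in> carrier_vec n"
  shows "(\<Sum>i<n. deg w n i powr r * (laplacian_mat w n r *\<^sub>v v)$i) = 0"
proof -
  have "(\<Sum>i<n. deg w n i powr r * (laplacian_mat w n r *\<^sub>v v)$i) =
     (\<Sum>i<n. 1 * (\<Sum>j<n. w i j * (v$i - v$j)))"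
  proof (rule sum.cong[OF refl])
    fix i assume "i \<in> {..<n}"
    hence i: "i < n" by simp
    have "deg w n i powr r * deg w n i powr (-r) = 1"
      using degpos[rule_format, OF i] by (rule powr_cancel)
    thus "deg w n i powr r * (laplacian_mat w n r *\<^sub>v v)$i = 1 * (\<Sum>j<n. w i j * (v$i - v$j))"
      using lap_mulvec[OF v i] by (simp add: mult.assoc[symmetric])
  qed
  also have "\<dots> = (1/2) * (\<Sum>i<n. \<Sum>j<n. w i j * (v$i - v$j) * (1 - 1))"
    by (rule quad_ident[OF sym])
  finally show ?thesis by simp
qed

lemma second_eig_pos:
  fixes lam :: "nat \<Rightarrow> real"
  assumes n2: "n \<ge> 2" and conn: "connected_graph w n"
    and eig_sorted: "\<forall>i j. i \<le> j \<longrightarrow> j < n \<longrightarrow> lam i \<le> lam j"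
    and eig: "char_poly (laplacian_mat w n r) = (\<Prod>i<n. [:- lam i, 1:])"
  shows "lam 1 > 0"
proof (rule ccontr)
  assume np: "\<not> lam 1 > 0"
  define L where "L = laplacian_mat w n r"
  have L: "L \<in> carrier_mat n n" by (simp add: L_def laplacian_mat_def)
  have ev_nonneg: "lam i \<ge> 0" if i: "i < n" for i
  proof -
    have "poly (char_poly L) (lam i) = 0"
      unfolding L_def eig poly_prod using i by (auto intro!: prod_zero)
    hence "eigenvalue L (lam i)" using eigenvalue_root_char_poly[OF L] by simp
    then obtain u where u: "u \<in> carrier_vec n" "u \<noteq> 0\<^sub>v n" "L *\<^sub>v u = lam i \<cdot>\<^sub>v u"
      using L unfolding eigenvalue_def eigenvector_def by auto
    show ?thesis using eig_nonneg[OF u(1,2)] u(3) unfolding L_def by blast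
  qed
  have l1: "lam 1 = 0" using np ev_nonneg[of 1] n2 by simp
  have l0: "lam 0 = 0" using eig_sorted[rule_format, of 0 1] l1 ev_nonneg[of 0] n2 by simp
  define es where "es = map lam [0..<n]"
  have cp: "char_poly L = (\<Prod>e\<leftarrow>es. [:- e, 1:])"
    unfolding L_def eig es_def
    by (simp add: prod.distinct_set_conv_list[symmetric] atLeast0LessThan)
  obtain B P Q where sd: "schur_decomposition L es = (B,P,Q)" by (metis prod_cases3)
  from schur_decomposition[OF L cp sd] have wit: "similar_mat_wit L B P Q"
    and ut: "upper_triangular B" and dg: "diag_mat B = es" by auto
  note W = similar_mat_witD2[OF L wit]
  have B: "B \<in> carrier_mat n n" and P: "P \<in> carrier_mat n n" and Q: "Q \<in> carrier_mat n n"
    using W by auto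
  have Bdiag: "B $$ (i,i) = lam i" if "i < n" for i
  proof -
    have "diag_mat B ! i = es ! i" using dg by simp
    thus ?thesis using that B by (simp add: diag_mat_def es_def)
  qed
  have Blow: "B $$ (i,j) = 0" if "i < n" "j < i" for i j
    using ut that B unfolding upper_triangular_def by auto
  define e0 :: "real vec" where "e0 = unit_vec n 0"
  define e1 :: "real vec" where "e1 = unit_vec n 1"
  have e0: "e0 \<in> carrier_vec n" and e1: "e1 \<in> carrier_vec n" by (auto simp: e0_def e1_def)
  have Be0: "B *\<^sub>v e0 = 0\<^sub>v n"
  proof (rule eq_vecI)
    fix i assume "i < dim_vec (0\<^sub>v n :: real vec)"
    hence i: "i < n" by simp
    have "(B *\<^sub>v e0) $ i = B $$ (i,0)" using i B n2 by (simp add: e0_def)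
    also have "\<dots> = 0" using Blow[OF i, of 0] Bdiag[of 0] l0 i by (cases i) auto
    finally show "(B *\<^sub>v e0) $ i = 0\<^sub>v n $ i" using i by simp
  qed (use B in auto)
  have Be1: "B *\<^sub>v e1 = B $$ (0,1) \<cdot>\<^sub>v e0"
  proof (rule eq_vecI)
    fix i assume "i < dim_vec (B $$ (0,1) \<cdot>\<^sub>v e0)"
    hence i: "i < n" by (simp add: e0_def)
    have "(B *\<^sub>v e1) $ i = B $$ (i,1)" using i B n2 by (simp add: e1_def)
    also have "\<dots> = (B $$ (0,1) \<cdot>\<^sub>v e0) $ i"
    proof (cases "i = 0")
      case True thus ?thesis using n2 by (simp add: e0_def)
    next
      case False
      hence "B $$ (i,1) = 0"
        using Blow[OF i, of 1] Bdiag[of 1] l1 n2 by (cases "i = 1") auto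
      thus ?thesis using False i by (simp add: e0_def)
    qed
    finally show "(B *\<^sub>v e1) $ i = (B $$ (0,1) \<cdot>\<^sub>v e0) $ i" .
  qed (use B in \<open>auto simp: e0_def\<close>)
  have QP: "Q * P = 1\<^sub>m n" and LPBQ: "L = P * B * Q" using W by auto
  have Lx: "L *\<^sub>v (P *\<^sub>v x) = P *\<^sub>v (B *\<^sub>v x)" if x: "x \<in> carrier_vec n" for x
  proof -
    have "L *\<^sub>v (P *\<^sub>v x) = (P * B * Q) *\<^sub>v (P *\<^sub>v x)" using LPBQ by simp
    also have "\<dots> = P *\<^sub>v (B *\<^sub>v (Q *\<^sub>v (P *\<^sub>v x)))"
    proof -
      have PB: "P * B \<in> carrier_mat n n" using P B by simp
      have "(P * B * Q) *\<^sub>v (P *\<^sub>v x) = (P * B) *\<^sub>v (Q *\<^sub>v (P *\<^sub>v x))"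
        by (rule assoc_mult_mat_vec[OF PB Q]) (use P x in simp)
      also have "\<dots> = P *\<^sub>v (B *\<^sub>v (Q *\<^sub>v (P *\<^sub>v x)))"
        by (rule assoc_mult_mat_vec[OF P B]) (use P Q x in simp)
      finally show ?thesis .
    qed
    also have "Q *\<^sub>v (P *\<^sub>v x) = x"
      using P Q x QP by (metis assoc_mult_mat_vec one_mult_mat_vec)
    finally show ?thesis .
  qed
  have QPx: "Q *\<^sub>v (P *\<^sub>v x) = x" if x: "x \<in> carrier_vec n" for x
    using P Q x QP by (metis assoc_mult_mat_vec one_mult_mat_vec)
  define u where "u = P *\<^sub>v e0"
  define v where "v = P *\<^sub>v e1"
  have u: "u \<in> carrier_vec n" and v: "v \<in> carrier_vec n" using P e0 e1 unfolding u_def v_def by auto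
  have P0: "P *\<^sub>v 0\<^sub>v n = 0\<^sub>v n" using P by (intro eq_vecI) (auto simp: scalar_prod_def)
  have Q0: "Q *\<^sub>v 0\<^sub>v n = 0\<^sub>v n" using Q by (intro eq_vecI) (auto simp: scalar_prod_def)
  have Lu: "L *\<^sub>v u = 0\<^sub>v n" unfolding u_def using Lx[OF e0] Be0 P0 by simp
  have Lv: "L *\<^sub>v v = B $$ (0,1) \<cdot>\<^sub>v u"
    unfolding v_def u_def using Lx[OF e1] Be1 mult_mat_vec[OF P e0] by simp
  have uc: "u $ i = u $ 0" if "i < n" for i
    using kernel_const[OF u conn Lu[unfolded L_def] that] .
  have u0: "u $ 0 \<noteq> 0"
  proof
    assume z: "u $ 0 = 0"
    have "u = 0\<^sub>v n"
    proof (rule eq_vecI)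
      fix i assume "i < dim_vec (0\<^sub>v n :: real vec)"
      hence i: "i < n" by simp
      show "u $ i = 0\<^sub>v n $ i" using i uc[OF i] z by simp
    qed (use u in simp)
    hence "e0 = 0\<^sub>v n" using QPx[OF e0] Q0 unfolding u_def by simp
    thus False using n2 unfolding e0_def by (metis index_unit_vec(1) index_zero_vec(1) zero_neq_one less_le_trans zero_less_numeral)
  qed
  have volpos: "(\<Sum>i<n. deg w n i powr r) > 0"
    using degpos n2 by (intro sum_pos) (auto simp: lessThan_empty_iff)
  have "0 = (\<Sum>i<n. deg w n i powr r * (L *\<^sub>v v)$i)"
    using weighted_sum_zero[OF v] unfolding L_def by simp
  also have "\<dots> = (\<Sum>i<n. deg w n i powr r * (B $$ (0,1) * u $ 0))"
  proof (rule sum.cong[OF refl])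
    fix i assume "i \<in> {..<n}"
    hence i: "i < n" by simp
    have "(L *\<^sub>v v)$i = B $$ (0,1) * u $ i" using Lv u i by simp
    thus "deg w n i powr r * (L *\<^sub>v v)$i = deg w n i powr r * (B $$ (0,1) * u $ 0)"
      using uc[OF i] by simp
  qed
  also have "\<dots> = (B $$ (0,1) * u $ 0) * (\<Sum>i<n. deg w n i powr r)"
    by (simp add: sum_distrib_left sum_distrib_right mult_ac)
  finally have "B $$ (0,1) = 0" using volpos u0 by simp
  moreover have "0 \<cdot>\<^sub>v u = 0\<^sub>v n" using u by (intro eq_vecI) auto
  ultimately have Lv0: "L *\<^sub>v v = 0\<^sub>v n" using Lv by simp
  have vc: "v $ i = v $ 0" if "i < n" for i
    using kernel_const[OF v conn Lv0[unfolded L_def] that] .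
  have vu: "v = (v $ 0 / u $ 0) \<cdot>\<^sub>v u"
  proof (rule eq_vecI)
    fix i assume "i < dim_vec ((v $ 0 / u $ 0) \<cdot>\<^sub>v u)"
    hence i: "i < n" using u by simp
    show "v $ i = ((v $ 0 / u $ 0) \<cdot>\<^sub>v u) $ i" using i u u0 uc[OF i] vc[OF i] by simp
  qed (use u v in simp)
  have "e1 = Q *\<^sub>v v" using QPx[OF e1] unfolding v_def by simp
  also have "\<dots> = (v $ 0 / u $ 0) \<cdot>\<^sub>v e0"
    using vu mult_mat_vec[OF Q u] QPx[OF e0] unfolding u_def by metis
  finally have "e1 $ 1 = ((v $ 0 / u $ 0) \<cdot>\<^sub>v e0) $ 1" by simp
  thus False using n2 by (simp add: e0_def e1_def)
qed

end


theorem mainTheorem12: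
  fixes w :: "nat \<Rightarrow> nat \<Rightarrow> real" and n :: nat and r :: real
    and S :: "nat set" and lam :: "nat \<Rightarrow> real"
  assumes n2: "n \<ge> 2"
    and r: "0 \<le> r" "r \<le> 1"
    and sym: "\<forall>i<n. \<forall>j<n. w i j = w j i"
    and nonneg: "\<forall>i<n. \<forall>j<n. w i j \<ge> 0"
    and diag: "\<forall>i<n. w i i = 0"
    and degpos: "\<forall>i<n. deg w n i > 0"
    and conn: "connected_graph w n"
    and eig_sorted: "\<forall>i j. i \<le> j \<longrightarrow> j < n \<longrightarrow> lam i \<le> lam j"
    and eig: "char_poly (laplacian_mat w n r) = (\<Prod>i<n. [:- lam i, 1:])"
    and S: "S \<subseteq> {..<n}" "S \<noteq> {}" "S \<noteq> {..<n}"
    and RS: "vol w n r S / vol w n r {..<n} \<noteq> 1/2"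
    and ratio: "lam 1 / lam (n - 1) < ln (sqrt 2) / ln (3/2)"
  shows "tau_rho w n r (lam (n - 1)) S < tau_t w n r (lam 1) S"
proof -
  have l2: "lam 1 > 0" by (rule second_eig_pos[OF sym nonneg degpos n2 conn eig_sorted eig])
  have "1 \<le> n - 1" "n - 1 < n" using n2 by auto
  hence ln: "lam (n - 1) > 0" using eig_sorted[rule_format, of 1 "n - 1"] l2 by linarith
  define dm where "dm = dmin w n"
  have fin: "finite (deg w n ` {..<n})" by simp
  have ne: "deg w n ` {..<n} \<noteq> {}" using n2 by (auto simp: lessThan_empty_iff)
  have dmle: "dm \<le> deg w n i" if "i < n" for i
    unfolding dm_def dmin_def using that fin by (intro Min_le) auto
  have dmpos: "dm > 0"
  proof -
    have "dm \<in> deg w n ` {..<n}" unfolding dm_def dmin_def using Min_in[OF fin ne] .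
    thus ?thesis using degpos by auto
  qed
  define dd where "dd = dm powr (r/2)"
  have ddpos: "dd > 0" using dmpos by (simp add: dd_def)
  have dd2: "dd^2 = dm powr r"
    unfolding dd_def power2_eq_square by (simp add: powr_add[symmetric])
  have volge: "vol w n r T \<ge> dd^2" if T: "T \<subseteq> {..<n}" "T \<noteq> {}" for T
  proof -
    obtain k where k: "k \<in> T" using T by auto
    have fT: "finite T" using T finite_subset by blast
    have "vol w n r T \<ge> deg w n k powr r"
      unfolding vol_def using fT k by (intro member_le_sum) auto
    moreover have "deg w n k powr r \<ge> dm powr r"
      using k T dmle dmpos r by (intro powr_mono2) auto
    ultimately show ?thesis using dd2 by simp
  qed
  define a where "a = vol w n r S"
  define c where "c = vol w n r ({..<n} - S)"
  define V where "V = vol w n r {..<n}"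
  have ga: "a \<ge> dd^2" unfolding a_def using volge S by auto
  have gc: "c \<ge> dd^2" unfolding c_def using S by (intro volge) auto
  have ddsq: "dd^2 > 0" using ddpos by simp
  have apos: "a > 0" and cpos: "c > 0" using ga gc ddsq by linarith+
  have Vac: "V = a + c"
    unfolding V_def a_def c_def vol_def using sum.subset_diff[OF S(1), of _] by (simp add: add.commute)
  have Vpos: "V > 0" using Vac apos cpos by simp
  have "dd \<le> sqrt a" using ga ddpos by (metis real_le_rsqrt less_imp_le)
  have arho: "a powr (-1/2) = 1 / sqrt a"
  proof -
    have "a powr (-1/2) = inverse (a powr (1/2))" using powr_minus[of a "1/2"] by simp
    also have "a powr (1/2) = sqrt a" using apos by (simp add: powr_half_sqrt)
    finally show ?thesis by (simp add: inverse_eq_divide)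
  qed
  have x_le: "(1/2) * dd * a powr (-1/2) \<le> 1/2"
  proof -
    have sa: "sqrt a > 0" using apos by simp
    have "dd / sqrt a \<le> 1" using \<open>dd \<le> sqrt a\<close> sa by simp
    thus ?thesis unfolding arho by simp
  qed
  have x_pos: "(1/2) * dd * a powr (-1/2) > 0" using apos ddpos unfolding arho by simp
  have "ln (1 + (1/2) * dd * a powr (-1/2)) \<le> ln (3/2)"
    using x_le x_pos by simp
  hence rho: "tau_rho w n r (lam (n - 1)) S \<le> ln (3/2) / lam (n - 1)"
    unfolding tau_rho_def dd_def[symmetric] a_def[symmetric] dm_def[symmetric] using ln
    by (simp add: divide_right_mono)
  define X where "X = sqrt V * \<bar>a / V - 1/2\<bar> * dd"
  have RSa: "a / V \<noteq> 1/2" using RS unfolding a_def V_def .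
  have Xpos: "X > 0" using RSa Vpos ddpos by (simp add: X_def)
  have hv: "a / V - 1/2 = (a - c) / (2 * V)" using Vpos Vac by (simp add: field_simps)
  have "X^2 = (sqrt V)^2 * (a / V - 1/2)^2 * dd^2"
    unfolding X_def by (simp add: power_mult_distrib power2_abs)
  also have "\<dots> = V * ((a - c) / (2 * V))^2 * dd^2" using Vpos hv by simp
  also have "\<dots> = (a - c)^2 * dd^2 / (4 * V)" using Vpos by (simp add: power_divide power_mult_distrib power2_eq_square)
  finally have "2 * X^2 = (a - c)^2 * dd^2 / (2 * V)" by simp
  also have "\<dots> < a * c"
    using key[OF apos cpos ddsq ga gc] Vpos Vac by (simp add: field_simps)
  finally have X2: "2 * X^2 < a * c" .
  have "sqrt 2 * X = sqrt (2 * X^2)" using Xpos by (simp add: real_sqrt_mult)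
  also have "\<dots> < sqrt (a * c)" using X2 by simp
  also have "\<dots> = sqrt a * sqrt c" by (simp add: real_sqrt_mult)
  finally have "sqrt 2 * X < sqrt a * sqrt c" .
  hence arg: "sqrt 2 < sqrt a * sqrt c / X" using Xpos by (simp add: pos_less_divide_eq)
  have "ln (sqrt 2) < ln (sqrt a * sqrt c / X)" using arg apos cpos Xpos by (intro ln_less_cancel_iff[THEN iffD2]) auto
  hence t: "ln (sqrt 2) / lam 1 < tau_t w n r (lam 1) S"
    unfolding tau_t_def Let_def X_def
    using l2 apos cpos Vpos
    by (simp add: a_def[symmetric] c_def[symmetric] V_def[symmetric] dd_def[symmetric] dm_def[symmetric]
        powr_half_sqrt divide_strict_right_mono)
  have l32: "ln (3/2::real) > 0" by simp
  have "lam 1 * ln (3/2) < ln (sqrt 2) * lam (n - 1)"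
    using ratio ln l32 by (simp add: divide_less_eq less_divide_eq field_simps)
  hence mid: "ln (3/2) / lam (n - 1) < ln (sqrt 2) / lam 1"
    using ln l2 by (simp add: field_simps)
  show ?thesis using rho mid t by linarith
qed

end
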